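(* Let $k\geq 2$ and $\ell\geq 3k+2$ be fixed integers. Let $G\in\mathcal{G}_{k,n,p}$ and let $X=X_0,X_1,\dots$ be a simple random walk on $G$ starting at $w\in V(G)$. Then, for every $x\in V(G)$, \[ \mathbb{P}_w[X_\ell=x]=\frac1n\pm\mathcal{O}\!\left(\frac{\sqrt{\log n}}{\sqrt p\, n^{3/2}}\right). \]
   Context: Let $p=p(n)$ satisfy $\frac{\log n}{n^{(k-1)/k}}\le p\le 1-\Omega(\frac{\log^4 n}{n})$. $\mathcal{G}_{k,n,p}$ denotes the set of graphs $G$ on $n$ vertices satisfying: (i) $G$ is not bipartite; (ii) $\operatorname{diam}(G)\le k$; (iii) every vertex has degree $d(v)=pn\pm\mathcal{O}(\sqrt{pn\log n})$; (iv) $2|E(G)|=pn^2\pm\mathcal{O}(\sqrt{pn^2\log n})$; (v) $|N(v)\cap N(w)|=p^2n\pm\mathcal{O}(\max\{\sqrt{p^2n\log n},\log n\})$ for all $v\ne w$; (vi) the unit eigenvector $\phi$ of the largest adjacency eigenvalue has entries $\phi_i=\frac1{\sqrt n}\pm\mathcal{O}(\frac{\log^{3/2}n}{\sqrt p\,n\log(pn)})$; (vii) $\lambda_1=(1+o(1))pn$; (viii) $\max\{|\lambda_2|,|\lambda_n|\}=\mathcal{O}(\sqrt{pn})$, where $\lambda_1\ge\dots\ge\lambda_n$ are the adjacency eigenvalues. Asymptotic notation is as $n\to\infty$ with constants independent of $n$. $\mathbb{P}_w[\cdot]=\mathbb{P}[\cdot\mid X_0=w]$. *)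

theory Defs
  imports "Jordan_Normal_Form.Char_Poly"
begin

text \<open>Simple graphs on the vertex set {0..<n}, given by a symmetric irreflexive
  adjacency relation E (only its restriction to {0..<n} is relevant).\<close>

definition simple_graph :: "nat \<Rightarrow> (nat \<Rightarrow> nat \<Rightarrow> bool) \<Rightarrow> bool" where
  "simple_graph n E \<longleftrightarrow> (\<forall>u<n. \<forall>v<n. E u v = E v u) \<and> (\<forall>u<n. \<not> E u u)"

definition nbhd :: "nat \<Rightarrow> (nat \<Rightarrow> nat \<Rightarrow> bool) \<Rightarrow> nat \<Rightarrow> nat set" where
  "nbhd n E v = {u \<in> {0..<n}. E v u}"

definition deg :: "nat \<Rightarrow> (nat \<Rightarrow> nat \<Rightarrow> bool) \<Rightarrow> nat \<Rightarrow> nat" where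
  "deg n E v = card (nbhd n E v)"

definition num_edges :: "nat \<Rightarrow> (nat \<Rightarrow> nat \<Rightarrow> bool) \<Rightarrow> nat" where
  "num_edges n E = card {(u, v). u < v \<and> v < n \<and> E u v}"

definition bipartite :: "nat \<Rightarrow> (nat \<Rightarrow> nat \<Rightarrow> bool) \<Rightarrow> bool" where
  "bipartite n E \<longleftrightarrow> (\<exists>S. \<forall>u<n. \<forall>v<n. E u v \<longrightarrow> (u \<in> S \<longleftrightarrow> v \<notin> S))"

definition is_walk :: "nat \<Rightarrow> (nat \<Rightarrow> nat \<Rightarrow> bool) \<Rightarrow> nat list \<Rightarrow> bool" where
  "is_walk n E xs \<longleftrightarrow> xs \<noteq> [] \<and> set xs \<subseteq> {0..<n} \<and>
     (\<forall>i. Suc i < length xs \<longrightarrow> E (xs ! i) (xs ! Suc i))"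

definition diam_le :: "nat \<Rightarrow> (nat \<Rightarrow> nat \<Rightarrow> bool) \<Rightarrow> nat \<Rightarrow> bool" where
  "diam_le n E k \<longleftrightarrow> (\<forall>u<n. \<forall>v<n. \<exists>xs. is_walk n E xs \<and> hd xs = u \<and> last xs = v \<and> length xs \<le> k + 1)"

definition adj_mat :: "nat \<Rightarrow> (nat \<Rightarrow> nat \<Rightarrow> bool) \<Rightarrow> real mat" where
  "adj_mat n E = mat n n (\<lambda>(i, j). if E i j then 1 else 0)"

text \<open>Adjacency eigenvalues with multiplicity, in non-increasing order:
  lambda_1 = eigs ! 0, ..., lambda_n = eigs ! (n-1).\<close>
definition eigs :: "nat \<Rightarrow> (nat \<Rightarrow> nat \<Rightarrow> bool) \<Rightarrow> real list" where
  "eigs n E = rev (sorted_list_of_multiset (proots (char_poly (adj_mat n E))))"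

text \<open>Distribution of the simple random walk: walk_prob n E w t x = P_w[X_t = x].\<close>
fun walk_prob :: "nat \<Rightarrow> (nat \<Rightarrow> nat \<Rightarrow> bool) \<Rightarrow> nat \<Rightarrow> nat \<Rightarrow> nat \<Rightarrow> real" where
  "walk_prob n E w 0 x = (if x = w then 1 else 0)"
| "walk_prob n E w (Suc t) x =
     (\<Sum>y<n. walk_prob n E w t y * (if E y x then 1 / real (deg n E y) else 0))"

text \<open>The class G_{k,n,p}, with explicit constants C3,...,C6,C8 for the O-terms in
  (iii)-(vi),(viii) and an error function eps(n) = o(1) for (vii).\<close>
definition good_graph ::
  "nat \<Rightarrow> nat \<Rightarrow> real \<Rightarrow> real \<Rightarrow> real \<Rightarrow> real \<Rightarrow> real \<Rightarrow> real \<Rightarrow> real \<Rightarrow> (nat \<Rightarrow> nat \<Rightarrow> bool) \<Rightarrow> bool" where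
  "good_graph k n p C3 C4 C5 C6 eps C8 E \<longleftrightarrow>
     simple_graph n E \<and>
     \<not> bipartite n E \<and>
     diam_le n E k \<and>
     (\<forall>v<n. \<bar>real (deg n E v) - p * n\<bar> \<le> C3 * sqrt (p * n * ln n)) \<and>
     \<bar>2 * real (num_edges n E) - p * n^2\<bar> \<le> C4 * sqrt (p * n^2 * ln n) \<and>
     (\<forall>v<n. \<forall>w<n. v \<noteq> w \<longrightarrow>
        \<bar>real (card (nbhd n E v \<inter> nbhd n E w)) - p^2 * n\<bar>
          \<le> C5 * max (sqrt (p^2 * n * ln n)) (ln n)) \<and>
     (\<exists>\<phi> \<in> carrier_vec n. adj_mat n E *\<^sub>v \<phi> = eigs n E ! 0 \<cdot>\<^sub>v \<phi> \<and>
        (\<Sum>i<n. (\<phi> $ i)^2) = 1 \<and>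
        (\<forall>i<n. \<bar>\<phi> $ i - 1 / sqrt n\<bar> \<le> C6 * ln n powr (3/2) / (sqrt p * n * ln (p * n)))) \<and>
     \<bar>eigs n E ! 0 - p * n\<bar> \<le> eps * (p * n) \<and>
     max \<bar>eigs n E ! 1\<bar> \<bar>eigs n E ! (n - 1)\<bar> \<le> C8 * sqrt (p * n)"

end

theory Submission
  imports Defs "Jordan_Normal_Form.Schur_Decomposition"
begin


fun mp :: "(nat \<Rightarrow> nat \<Rightarrow> real) \<Rightarrow> nat \<Rightarrow> nat \<Rightarrow> nat \<Rightarrow> nat \<Rightarrow> real" where
  "mp a n 0 i j = (if i = j then 1 else 0)"
| "mp a n (Suc t) i j = (\<Sum>k<n. mp a n t i k * a k j)"

definition mv :: "(nat \<Rightarrow> nat \<Rightarrow> real) \<Rightarrow> nat \<Rightarrow> (nat \<Rightarrow> real) \<Rightarrow> nat \<Rightarrow> real" where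
  "mv a n v = (\<lambda>i. \<Sum>j<n. a i j * v j)"

definition ip :: "nat \<Rightarrow> (nat \<Rightarrow> real) \<Rightarrow> (nat \<Rightarrow> real) \<Rightarrow> real" where
  "ip n u v = (\<Sum>i<n. u i * v i)"

lemma mp_mv: "i < n \<Longrightarrow> (mv a n ^^ t) v i = (\<Sum>j<n. mp a n t i j * v j)"
proof (induction t arbitrary: v)
  case 0
  have "(\<Sum>j<n. mp a n 0 i j * v j) = (\<Sum>j<n. if i = j then v j else 0)" by (rule sum.cong) auto
  then show ?case using 0 by (simp add: sum.delta)
next
  case (Suc t)
  have "(mv a n ^^ Suc t) v i = (mv a n ^^ t) (mv a n v) i" by (simp add: funpow_Suc_right del: funpow.simps)
  also have "\<dots> = (\<Sum>j<n. mp a n t i j * mv a n v j)" by (rule Suc.IH[OF Suc.prems])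
  also have "\<dots> = (\<Sum>j<n. mp a n t i j * (\<Sum>k<n. a j k * v k))" by (simp add: mv_def)
  also have "\<dots> = (\<Sum>j<n. \<Sum>k<n. mp a n t i j * a j k * v k)" by (simp add: sum_distrib_left mult.assoc)
  also have "\<dots> = (\<Sum>k<n. \<Sum>j<n. mp a n t i j * a j k * v k)" by (rule sum.swap)
  also have "\<dots> = (\<Sum>k<n. mp a n (Suc t) i k * v k)" by (simp add: sum_distrib_right)
  finally show ?case .
qed

lemma mp_unit: "(j::nat) < n \<Longrightarrow> (\<Sum>k<n. f k * (if k = j then 1 else 0)) = (f j :: real)"
proof -
  assume j: "j < n"
  have "(\<Sum>k<n. f k * (if k = j then 1 else 0)) = (\<Sum>k<n. if k = j then f k else 0)" by (rule sum.cong) auto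
  also have "\<dots> = f j" using j by (subst sum.delta) auto
  finally show ?thesis .
qed

lemma mp_e: "i < n \<Longrightarrow> j < n \<Longrightarrow> (mv a n ^^ t) (\<lambda>k. if k = j then 1 else 0) i = mp a n t i j"
  by (simp add: mp_mv mp_unit)

lemma mp_left: assumes "i < n" "j < n"
  shows "mp a n (Suc t) i j = (\<Sum>k<n. a i k * mp a n t k j)"
proof -
  have "mp a n (Suc t) i j = (mv a n ^^ Suc t) (\<lambda>k. if k = j then 1 else 0) i" using assms by (simp only: mp_e)
  also have "\<dots> = (\<Sum>k<n. a i k * (mv a n ^^ t) (\<lambda>k. if k = j then 1 else 0) k)" by (simp add: mv_def)
  also have "\<dots> = (\<Sum>k<n. a i k * mp a n t k j)" using assms by (simp add: mp_e)
  finally show ?thesis .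
qed

lemma mp_sym: assumes sym: "\<forall>i<n. \<forall>j<n. a i j = a j i"
  shows "i < n \<Longrightarrow> j < n \<Longrightarrow> mp a n t i j = mp a n t j i"
proof (induction t arbitrary: i j)
  case 0 then show ?case by simp
next
  case (Suc t)
  have "mp a n (Suc t) i j = (\<Sum>k<n. mp a n t i k * a k j)" by simp
  also have "\<dots> = (\<Sum>k<n. a j k * mp a n t k i)"
    by (rule sum.cong, simp, use Suc sym in auto)
  also have "\<dots> = mp a n (Suc t) j i" by (rule mp_left[OF Suc.prems(2,1), symmetric])
  finally show ?case .
qed

lemma mp_add: assumes "i < n" "j < n"
  shows "mp a n (s + t) i j = (\<Sum>k<n. mp a n s i k * mp a n t k j)"
proof -
  have "mp a n (s + t) i j = (mv a n ^^ (s + t)) (\<lambda>k. if k = j then 1 else 0) i" using assms by (simp only: mp_e)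
  also have "\<dots> = (mv a n ^^ s) ((mv a n ^^ t) (\<lambda>k. if k = j then 1 else 0)) i" by (simp add: funpow_add)
  also have "\<dots> = (\<Sum>k<n. mp a n s i k * (mv a n ^^ t) (\<lambda>k. if k = j then 1 else 0) k)" using assms by (simp add: mp_mv)
  also have "\<dots> = (\<Sum>k<n. mp a n s i k * mp a n t k j)" using assms by (simp add: mp_e)
  finally show ?thesis .
qed

lemma mp_trace: assumes sym: "\<forall>i<n. \<forall>j<n. a i j = a j i"
  shows "(\<Sum>i<n. mp a n (2*N) i i) = (\<Sum>i<n. \<Sum>j<n. (mp a n N i j)^2)"
proof (rule sum.cong[OF refl])
  fix i assume i: "i \<in> {..<n}"
  have "mp a n (2*N) i i = mp a n (N + N) i i" by (simp add: mult_2)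
  also have "\<dots> = (\<Sum>j<n. mp a n N i j * mp a n N j i)" using i by (simp add: mp_add)
  also have "\<dots> = (\<Sum>j<n. (mp a n N i j)^2)"
    by (rule sum.cong, simp, use i mp_sym[OF sym] in \<open>auto simp: power2_eq_square\<close>)
  finally show "mp a n (2*N) i i = (\<Sum>j<n. (mp a n N i j)^2)" .
qed

lemma ip_mv: assumes sym: "\<forall>i<n. \<forall>j<n. a i j = a j i"
  shows "ip n (mv a n u) v = ip n u (mv a n v)"
proof -
  have "ip n (mv a n u) v = (\<Sum>i<n. \<Sum>j<n. a i j * u j * v i)"
    by (simp add: ip_def mv_def sum_distrib_right)
  also have "\<dots> = (\<Sum>j<n. \<Sum>i<n. a i j * u j * v i)" by (rule sum.swap)
  also have "\<dots> = ip n u (mv a n v)"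
    unfolding ip_def mv_def sum_distrib_left
    by (rule sum.cong, simp, rule sum.cong, simp, use sym in \<open>auto simp: mult_ac\<close>)
  finally show ?thesis .
qed

lemma ip_pow: assumes sym: "\<forall>i<n. \<forall>j<n. a i j = a j i"
  shows "ip n ((mv a n ^^ t) u) v = ip n u ((mv a n ^^ t) v)"
proof (induction t arbitrary: u v)
  case 0 then show ?case by simp
next
  case (Suc t)
  have "ip n ((mv a n ^^ Suc t) u) v = ip n (mv a n ((mv a n ^^ t) u)) v" by simp
  also have "\<dots> = ip n ((mv a n ^^ t) u) (mv a n v)" by (rule ip_mv[OF sym])
  also have "\<dots> = ip n u ((mv a n ^^ t) (mv a n v))" by (rule Suc)
  also have "\<dots> = ip n u ((mv a n ^^ Suc t) v)" by (simp add: funpow_Suc_right del: funpow.simps)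
  finally show ?case .
qed

lemma eig_pow: assumes ev: "\<forall>i<n. mv a n \<phi> i = lam * \<phi> i"
  shows "i < n \<Longrightarrow> (mv a n ^^ t) \<phi> i = lam ^ t * \<phi> i"
proof (induction t arbitrary: i)
  case 0 then show ?case by simp
next
  case (Suc t)
  have "(mv a n ^^ Suc t) \<phi> i = (\<Sum>j<n. a i j * (mv a n ^^ t) \<phi> j)" by (simp add: mv_def)
  also have "\<dots> = (\<Sum>j<n. lam ^ t * (a i j * \<phi> j))" by (rule sum.cong, simp, use Suc in \<open>auto simp: mult_ac\<close>)
  also have "\<dots> = lam ^ t * mv a n \<phi> i" by (simp add: mv_def sum_distrib_left)
  also have "\<dots> = lam ^ Suc t * \<phi> i" using ev Suc by simp
  finally show ?case .
qed

lemma ip_sq_expand: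
  "ip n (\<lambda>i. r i - c * p i - d * y i) (\<lambda>i. r i - c * p i - d * y i) =
    ip n r r - 2*c*ip n r p - 2*d*ip n r y + c^2 * ip n p p + d^2 * ip n y y + 2*c*d*ip n p y"
proof -
  have "\<And>i. (r i - c * p i - d * y i) * (r i - c * p i - d * y i) =
     r i * r i - 2*c*(r i * p i) - 2*d*(r i * y i) + c^2 * (p i * p i) + d^2 * (y i * y i) + 2*c*d*(p i * y i)"
    by (simp add: algebra_simps power2_eq_square)
  then show ?thesis unfolding ip_def
    by (simp add: sum.distrib sum_subtractf sum_distrib_left)
qed

lemma ip_nonneg: "ip n u u \<ge> 0"
  unfolding ip_def by (rule sum_nonneg) simp

lemma bessel2:
  assumes "ip n p p = 1" "ip n y y = 1" "ip n p y = 0"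
  shows "(ip n r p)^2 + (ip n r y)^2 \<le> ip n r r"
proof -
  let ?c = "ip n r p" and ?d = "ip n r y"
  have "0 \<le> ip n (\<lambda>i. r i - ?c * p i - ?d * y i) (\<lambda>i. r i - ?c * p i - ?d * y i)" by (rule ip_nonneg)
  also have "\<dots> = ip n r r - ?c^2 - ?d^2"
    unfolding ip_sq_expand using assms by (simp add: power2_eq_square)
  finally show ?thesis by simp
qed

lemma ip_comm: "ip n u v = ip n v u" unfolding ip_def by (simp add: mult.commute)

lemma cauchy_schwarz_ip: "(ip n u v)^2 \<le> ip n u u * ip n v v"
proof (cases "ip n v v = 0")
  case True
  have "\<forall>i\<in>{..<n}. v i * v i = 0"
    using True unfolding ip_def by (subst sum_nonneg_eq_0_iff[symmetric]) auto
  hence "ip n u v = 0" unfolding ip_def by (intro sum.neutral) auto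
  then show ?thesis using True by simp
next
  case False
  hence pos: "ip n v v > 0" using ip_nonneg[of n v] by linarith
  let ?t = "ip n u v / ip n v v"
  have "0 \<le> ip n (\<lambda>i. u i - ?t * v i - 0 * v i) (\<lambda>i. u i - ?t * v i - 0 * v i)" by (rule ip_nonneg)
  also have "\<dots> = ip n u u - 2 * ?t * ip n u v + ?t^2 * ip n v v"
    unfolding ip_sq_expand by simp
  also have "\<dots> = ip n u u - (ip n u v)^2 / ip n v v"
    using pos by (simp add: power2_eq_square field_simps)
  finally have "(ip n u v)^2 / ip n v v \<le> ip n u u" by simp
  then show ?thesis using pos by (simp add: divide_le_eq mult.commute)
qed

lemma ip_scale_left: "ip n (\<lambda>i. c * u i) v = c * ip n u v"
  unfolding ip_def by (simp add: sum_distrib_left mult.assoc)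

lemma ip_scale_right: "ip n u (\<lambda>i. c * v i) = c * ip n u v"
  unfolding ip_def by (simp add: sum_distrib_left mult_ac)

lemma mv_scale: "mv a n (\<lambda>i. c * u i) = (\<lambda>i. c * mv a n u i)"
  unfolding mv_def by (simp add: sum_distrib_left mult_ac)

lemma ip_zero_imp: assumes "ip n y y = 0" "i < n" shows "y i = 0"
proof -
  have "\<forall>i\<in>{..<n}. y i * y i = 0"
    using assms unfolding ip_def by (subst sum_nonneg_eq_0_iff[symmetric]) auto
  then show ?thesis using assms by auto
qed

lemma ip_cong: "(\<And>i. i < n \<Longrightarrow> u i = u' i) \<Longrightarrow> (\<And>i. i < n \<Longrightarrow> v i = v' i) \<Longrightarrow> ip n u v = ip n u' v'"
  unfolding ip_def by (rule sum.cong) auto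

locale spec =
  fixes a :: "nat \<Rightarrow> nat \<Rightarrow> real" and n :: nat and phi :: "nat \<Rightarrow> real" and lam K M :: real
  assumes sym: "\<forall>i<n. \<forall>j<n. a i j = a j i"
    and ev: "\<forall>i<n. mv a n phi i = lam * phi i"
    and phi1: "ip n phi phi = 1"
    and K: "K \<ge> 0" and M: "M \<ge> 0"
    and TB: "\<And>N. (\<Sum>i<n. \<Sum>j<n. (mp a n N i j)^2) \<le> lam^(2*N) + K * M^(2*N)"
begin

abbreviation A where "A t v \<equiv> (mv a n ^^ t) v"

lemma frob:
  assumes y1: "ip n y y = 1" and py: "ip n phi y = 0"
  shows "lam^(2*N) + ip n (A N y) (A N y) \<le> (\<Sum>i<n. \<Sum>j<n. (mp a n N i j)^2)"
proof -
  have b: "(ip n (\<lambda>j. mp a n N i j) phi)^2 + (ip n (\<lambda>j. mp a n N i j) y)^2 \<le> ip n (\<lambda>j. mp a n N i j) (\<lambda>j. mp a n N i j)"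
    for i by (rule bessel2[OF phi1 y1 py])
  have e1: "ip n (\<lambda>j. mp a n N i j) phi = lam^N * phi i" if "i < n" for i
    using mp_mv[where a=a and t=N and v=phi, OF that] eig_pow[OF ev that, of N] unfolding ip_def by simp
  have e2: "ip n (\<lambda>j. mp a n N i j) y = A N y i" if "i < n" for i
    using mp_mv[where a=a and t=N and v=y, OF that] unfolding ip_def by simp
  have "(\<Sum>i<n. (lam^N * phi i)^2 + (A N y i)^2) \<le> (\<Sum>i<n. \<Sum>j<n. (mp a n N i j)^2)"
  proof (rule sum_mono)
    fix i assume i: "i \<in> {..<n}"
    show "(lam^N * phi i)^2 + (A N y i)^2 \<le> (\<Sum>j<n. (mp a n N i j)^2)"
      using b[of i] e1[of i] e2[of i] i by (simp add: ip_def power2_eq_square)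
  qed
  moreover have "(\<Sum>i<n. (lam^N * phi i)^2 + (A N y i)^2) = lam^(2*N) * ip n phi phi + ip n (A N y) (A N y)"
    by (simp add: ip_def sum.distrib sum_distrib_left power_mult_distrib power2_eq_square power_mult mult_ac)
  ultimately show ?thesis using phi1 by simp
qed

lemma g_bound:
  assumes y1: "ip n y y = 1" and py: "ip n phi y = 0"
  shows "ip n (A N y) (A N y) \<le> K * M^(2*N)"
  using frob[OF y1 py, of N] TB[of N] by simp

lemma g_sq:
  assumes y1: "ip n y y = 1"
  shows "(ip n (A m y) (A m y))^2 \<le> ip n (A (2*m) y) (A (2*m) y)"
proof -
  have "ip n (A m y) (A m y) = ip n y (A m (A m y))" by (rule ip_pow[OF sym])
  also have "A m (A m y) = A (2*m) y" by (simp add: mult_2 funpow_add)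
  finally have "(ip n (A m y) (A m y))^2 = (ip n y (A (2*m) y))^2" by simp
  also have "\<dots> \<le> ip n y y * ip n (A (2*m) y) (A (2*m) y)" by (rule cauchy_schwarz_ip)
  finally show ?thesis using y1 by simp
qed

lemma g_pow2:
  assumes y1: "ip n y y = 1"
  shows "(ip n (A 1 y) (A 1 y))^(2^j) \<le> ip n (A (2^j) y) (A (2^j) y)"
proof (induction j)
  case 0 then show ?case by simp
next
  case (Suc j)
  have "(ip n (A 1 y) (A 1 y))^(2^Suc j) = ((ip n (A 1 y) (A 1 y))^(2^j))^2"
    by (simp add: power_mult[symmetric] mult.commute)
  also have "\<dots> \<le> (ip n (A (2^j) y) (A (2^j) y))^2"
    by (rule power_mono[OF Suc.IH]) (simp add: ip_nonneg)
  also have "\<dots> \<le> ip n (A (2*2^j) y) (A (2*2^j) y)" by (rule g_sq[OF y1])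
  finally show ?case by simp
qed

lemma A1_unit:
  assumes y1: "ip n y y = 1" and py: "ip n phi y = 0"
  shows "ip n (A 1 y) (A 1 y) \<le> M^2"
proof (rule ccontr)
  let ?g = "ip n (A 1 y) (A 1 y)"
  assume "\<not> ?g \<le> M^2"
  hence gt: "?g > M^2" by simp
  have bnd: "?g^(2^j) \<le> K * (M^2)^(2^j)" for j
  proof -
    have "?g^(2^j) \<le> ip n (A (2^j) y) (A (2^j) y)" by (rule g_pow2[OF y1])
    also have "\<dots> \<le> K * M^(2*2^j)" by (rule g_bound[OF y1 py])
    finally show ?thesis by (simp add: power_mult)
  qed
  show False
  proof (cases "M = 0")
    case True
    then show False using bnd[of 0] gt by simp
  next
    case False
    hence M2: "M^2 > 0" using M by simp
    define r where "r = ?g / M^2"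
    have r1: "r > 1" unfolding r_def using gt M2 by simp
    obtain j where j: "K < r ^ j" using real_arch_pow[OF r1] by blast
    have "r ^ j \<le> r ^ (2^j)" using r1 by (intro power_increasing) (simp add: less_imp_le_nat[OF less_exp], simp)
    moreover have "r ^ (2^j) \<le> K"
    proof -
      have "?g^(2^j) = r^(2^j) * (M^2)^(2^j)" unfolding r_def using M2 by (simp add: power_divide)
      then show ?thesis using bnd[of j] M2 by (simp add: zero_less_power)
    qed
    ultimately show False using j by simp
  qed
qed

lemma A1_gen:
  assumes py: "ip n phi y = 0"
  shows "ip n (A 1 y) (A 1 y) \<le> M^2 * ip n y y"
proof (cases "ip n y y = 0")
  case True
  have "A 1 y i = 0" for i
    using ip_zero_imp[OF True] by (simp add: mv_def)
  then show ?thesis using True by (simp add: ip_def)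
next
  case False
  hence pos: "ip n y y > 0" using ip_nonneg[of n y] by linarith
  define s where "s = sqrt (ip n y y)"
  have s: "s > 0" "s^2 = ip n y y" unfolding s_def using pos by auto
  define u where "u = (\<lambda>i. (1/s) * y i)"
  have u1: "ip n u u = 1" unfolding u_def ip_scale_left ip_scale_right using s pos
    by (simp add: power2_eq_square field_simps)
  have pu: "ip n phi u = 0" unfolding u_def ip_scale_right using py by simp
  have "mv a n u = (\<lambda>i. (1/s) * mv a n y i)" unfolding u_def by (rule mv_scale)
  hence A1u: "A 1 u = (\<lambda>i. (1/s) * A 1 y i)" by simp
  have "ip n (A 1 u) (A 1 u) = (1/s) * ((1/s) * ip n (A 1 y) (A 1 y))"
    unfolding A1u by (simp only: ip_scale_left ip_scale_right)
  with A1_unit[OF u1 pu] have "(1/s) * ((1/s) * ip n (A 1 y) (A 1 y)) \<le> M^2" by simp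
  then show ?thesis using s by (simp add: field_simps power2_eq_square)
qed

lemma orth_pres:
  assumes py: "ip n phi y = 0"
  shows "ip n phi (A t y) = 0"
proof -
  have "ip n phi (A t y) = ip n (A t phi) y" by (rule ip_pow[OF sym, symmetric])
  also have "\<dots> = ip n (\<lambda>i. lam^t * phi i) y" by (rule ip_cong) (use eig_pow[OF ev] in auto)
  also have "\<dots> = 0" using py by (simp add: ip_scale_left)
  finally show ?thesis .
qed

lemma iter_bound:
  assumes py: "ip n phi y = 0"
  shows "ip n (A t y) (A t y) \<le> M^(2*t) * ip n y y"
proof (induction t)
  case 0 then show ?case by simp
next
  case (Suc t)
  have "ip n (A (Suc t) y) (A (Suc t) y) = ip n (A 1 (A t y)) (A 1 (A t y))" by simp
  also have "\<dots> \<le> M^2 * ip n (A t y) (A t y)" by (rule A1_gen[OF orth_pres[OF py]])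
  also have "\<dots> \<le> M^2 * (M^(2*t) * ip n y y)" by (rule mult_left_mono[OF Suc.IH]) simp
  also have "M^2 * (M^(2*t) * ip n y y) = M^(2*Suc t) * ip n y y"
    by (simp only: mult_Suc_right power_add mult.assoc)
  finally show ?case .
qed

lemma entry_bound:
  assumes w: "w < n" and x: "x < n"
  shows "\<bar>mp a n l w x - lam^l * phi w * phi x\<bar> \<le> M^l"
proof -
  define e where "e = (\<lambda>j. if j = x then 1 else (0::real))"
  define y where "y = (\<lambda>j. e j - phi x * phi j - 0 * phi j)"
  have ee: "ip n e e = 1" unfolding ip_def e_def using x by (simp add: if_distrib cong: if_cong)
  have ep: "ip n e phi = phi x" unfolding ip_def e_def using mp_unit[OF x, of phi]
    by (simp add: mult.commute)
  have pe: "ip n phi e = phi x" using ep ip_comm by metis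
  have py: "ip n phi y = 0"
  proof -
    have "ip n phi y = ip n phi e - phi x * ip n phi phi"
      unfolding y_def ip_def by (simp add: sum_subtractf sum_distrib_left algebra_simps)
    then show ?thesis using pe phi1 by simp
  qed
  have yy: "ip n y y = 1 - (phi x)^2"
    unfolding y_def ip_sq_expand using ee ep phi1 by (simp add: power2_eq_square)
  have Ay: "A l y w = mp a n l w x - phi x * (lam^l * phi w)"
  proof -
    have "A l y w = (\<Sum>j<n. mp a n l w j * (e j - phi x * phi j))"
      using mp_mv[OF w] unfolding y_def by simp
    also have "\<dots> = (\<Sum>j<n. mp a n l w j * e j) - phi x * (\<Sum>j<n. mp a n l w j * phi j)"
      by (simp add: algebra_simps sum_subtractf sum_distrib_left)
    also have "(\<Sum>j<n. mp a n l w j * e j) = mp a n l w x" unfolding e_def using x by (rule mp_unit)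
    also have "(\<Sum>j<n. mp a n l w j * phi j) = lam^l * phi w"
      using mp_mv[OF w, where a=a and t=l and v=phi] eig_pow[OF ev w] by simp
    finally show ?thesis .
  qed
  have "A l y w * A l y w \<le> (\<Sum>i<n. A l y i * A l y i)"
    by (rule member_le_sum) (use w in auto)
  hence "(A l y w)^2 \<le> ip n (A l y) (A l y)" unfolding ip_def by (simp add: power2_eq_square)
  also have "\<dots> \<le> M^(2*l) * ip n y y" by (rule iter_bound[OF py])
  also have "\<dots> \<le> M^(2*l)" using yy by (simp add: mult_left_le)
  finally have "(A l y w)^2 \<le> (M^l)^2" by (simp add: power_mult mult.commute)
  hence "\<bar>A l y w\<bar> \<le> \<bar>M^l\<bar>" by (simp only: abs_le_square_iff)
  hence "\<bar>A l y w\<bar> \<le> M^l" using M by simp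
  then show ?thesis using Ay by (simp add: mult_ac)
qed

end



definition mtr :: "'a::comm_ring_1 mat \<Rightarrow> 'a" where "mtr A = (\<Sum>i<dim_row A. A $$ (i,i))"

lemma mtr_comm:
  fixes A B :: "'a::comm_ring_1 mat"
  assumes A: "A \<in> carrier_mat n m" and B: "B \<in> carrier_mat m n"
  shows "mtr (A * B) = mtr (B * A)"
proof -
  have "mtr (A * B) = (\<Sum>i<n. \<Sum>j<m. A $$ (i,j) * B $$ (j,i))"
    using A B by (simp add: mtr_def scalar_prod_def atLeast0LessThan)
  also have "\<dots> = (\<Sum>j<m. \<Sum>i<n. B $$ (j,i) * A $$ (i,j))"
    by (subst sum.swap) (simp add: mult.commute)
  also have "\<dots> = mtr (B * A)"
    using A B by (simp add: mtr_def scalar_prod_def atLeast0LessThan)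
  finally show ?thesis .
qed

lemma upper_tri_pow:
  fixes B :: "'a::comm_ring_1 mat"
  assumes B: "B \<in> carrier_mat n n" and ut: "upper_triangular B"
  shows "upper_triangular (B ^\<^sub>m m) \<and> (\<forall>i<n. (B ^\<^sub>m m) $$ (i,i) = B $$ (i,i) ^ m)"
proof (induction m)
  case 0
  then show ?case using B by auto
next
  case (Suc m)
  have Bm: "B ^\<^sub>m m \<in> carrier_mat n n" using B by simp
  have utm: "\<And>i j. i < n \<Longrightarrow> j < i \<Longrightarrow> (B ^\<^sub>m m) $$ (i,j) = 0"
    using Suc.IH Bm by (auto simp: upper_triangular_def)
  have utB: "\<And>i j. i < n \<Longrightarrow> j < i \<Longrightarrow> B $$ (i,j) = 0"
    using ut B by (auto simp: upper_triangular_def)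
  have entry: "(B ^\<^sub>m Suc m) $$ (i,j) = (\<Sum>k<n. (B ^\<^sub>m m) $$ (i,k) * B $$ (k,j))"
    if "i < n" "j < n" for i j
    using that B Bm by (simp add: scalar_prod_def atLeast0LessThan)
  have "upper_triangular (B ^\<^sub>m Suc m)"
  proof (rule upper_triangularI)
    fix i j assume ij: "i < dim_row (B ^\<^sub>m Suc m)" "j < i"
    hence i: "i < n" and j: "j < n" using B by auto
    have "(\<Sum>k<n. (B ^\<^sub>m m) $$ (i,k) * B $$ (k,j)) = 0"
    proof (rule sum.neutral, intro ballI)
      fix k assume k: "k \<in> {..<n}"
      show "(B ^\<^sub>m m) $$ (i,k) * B $$ (k,j) = 0"
      proof (cases "k < i")
        case True then show ?thesis using utm[OF i] by simp
      next
        case False then have "j < k" using ij by simp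
        then show ?thesis using utB k by simp
      qed
    qed
    then show "(B ^\<^sub>m Suc m) $$ (i,j) = 0" using entry[OF i j] by simp
  qed
  moreover have "\<forall>i<n. (B ^\<^sub>m Suc m) $$ (i,i) = B $$ (i,i) ^ Suc m"
  proof (intro allI impI)
    fix i assume i: "i < n"
    have "(\<Sum>k<n. (B ^\<^sub>m m) $$ (i,k) * B $$ (k,i)) = (B ^\<^sub>m m) $$ (i,i) * B $$ (i,i)"
      (is "?S = _")
    proof -
      have "?S = (B ^\<^sub>m m) $$ (i,i) * B $$ (i,i) + (\<Sum>k\<in>{..<n}-{i}. (B ^\<^sub>m m) $$ (i,k) * B $$ (k,i))"
        using i by (simp add: sum.remove)
      also have "(\<Sum>k\<in>{..<n}-{i}. (B ^\<^sub>m m) $$ (i,k) * B $$ (k,i)) = 0"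
      proof (rule sum.neutral, intro ballI)
        fix k assume k: "k \<in> {..<n}-{i}"
        show "(B ^\<^sub>m m) $$ (i,k) * B $$ (k,i) = 0"
        proof (cases "k < i")
          case True then show ?thesis using utm[OF i] by simp
        next
          case False then have "i < k" using k by auto
          then show ?thesis using utB k by simp
        qed
      qed
      finally show ?thesis by simp
    qed
    then show "(B ^\<^sub>m Suc m) $$ (i,i) = B $$ (i,i) ^ Suc m"
      using entry[OF i i] Suc.IH i by simp
  qed
  ultimately show ?case by blast
qed

lemma real_sym_eigenvalue_real:
  fixes A :: "real mat"
  assumes A: "A \<in> carrier_mat n n" and sym: "\<forall>i<n. \<forall>j<n. A $$ (i,j) = A $$ (j,i)"
    and ev: "eigenvector (map_mat complex_of_real A) z a"
  shows "Im a = 0"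
proof -
  let ?Ac = "map_mat complex_of_real A"
  have z: "z \<in> carrier_vec n" and z0: "z \<noteq> 0\<^sub>v n" and eq: "?Ac *\<^sub>v z = a \<cdot>\<^sub>v z"
    using ev A unfolding eigenvector_def by auto
  have row: "(\<Sum>j<n. complex_of_real (A $$ (i,j)) * z $ j) = a * z $ i" if i: "i < n" for i
  proof -
    have "(?Ac *\<^sub>v z) $ i = (a \<cdot>\<^sub>v z) $ i" using eq by simp
    then show ?thesis using i A z by (simp add: scalar_prod_def atLeast0LessThan)
  qed
  define S where "S = (\<Sum>i<n. cnj (z $ i) * (\<Sum>j<n. complex_of_real (A $$ (i,j)) * z $ j))"
  define r where "r = (\<Sum>i<n. (cmod (z $ i))^2)"
  have S1: "S = a * complex_of_real r"
  proof -
    have "S = (\<Sum>i<n. a * (cnj (z $ i) * z $ i))"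
      unfolding S_def by (rule sum.cong, simp, subst row, auto)
    also have "\<dots> = a * (\<Sum>i<n. complex_of_real ((cmod (z $ i))^2))"
    proof -
      have "\<And>w. complex_of_real ((cmod w)^2) = cnj w * w"
        by (metis complex_norm_square mult.commute)
      then show ?thesis by (simp add: sum_distrib_left)
    qed
    finally show ?thesis unfolding r_def by simp
  qed
  have "cnj S = (\<Sum>i<n. \<Sum>j<n. z $ i * (complex_of_real (A $$ (i,j)) * cnj (z $ j)))"
    unfolding S_def by (simp add: sum_distrib_left)
  also have "\<dots> = (\<Sum>j<n. \<Sum>i<n. z $ i * (complex_of_real (A $$ (i,j)) * cnj (z $ j)))"
    by (rule sum.swap)
  also have "\<dots> = S"
    unfolding S_def sum_distrib_left
    by (rule sum.cong, simp, rule sum.cong, simp, use sym in \<open>auto simp: mult_ac\<close>)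
  finally have "cnj S = S" .
  hence ImS: "Im S = 0" by (metis Reals_cnj_iff complex_is_Real_iff)
  have "r > 0"
  proof -
    obtain i where i: "i < n" and zi: "z $ i \<noteq> 0" using z z0 by (metis eq_vecI carrier_vecD index_zero_vec(1,2))
    have "(cmod (z $ i))^2 \<le> r" unfolding r_def
      by (rule member_le_sum) (use i in auto)
    moreover have "(cmod (z $ i))^2 > 0" using zi by simp
    ultimately show ?thesis by linarith
  qed
  moreover have "Im a * r = 0" using S1 ImS by simp
  ultimately show ?thesis by simp
qed

lemma sum_nth_perm:
  fixes f :: "'a \<Rightarrow> 'b::comm_monoid_add"
  assumes "mset xs = mset ys"
  shows "(\<Sum>i<length xs. f (xs ! i)) = (\<Sum>i<length ys. f (ys ! i))"
proof -
  have "\<And>zs::'a list. (\<Sum>i<length zs. f (zs ! i)) = sum_list (map f zs)"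
    by (simp add: sum_list_sum_nth atLeast0LessThan)
  moreover have "sum_list (map f xs) = sum_list (map f ys)"
    by (metis assms mset_map sum_mset_sum_list)
  ultimately show ?thesis by simp
qed

lemma sym_trace_eigs:
  fixes A :: "real mat"
  assumes A: "A \<in> carrier_mat n n" and sym: "\<forall>i<n. \<forall>j<n. A $$ (i,j) = A $$ (j,i)"
  shows "length (rev (sorted_list_of_multiset (proots (char_poly A)))) = n \<and>
    (\<forall>m. mtr (A ^\<^sub>m m) = (\<Sum>i<n. rev (sorted_list_of_multiset (proots (char_poly A))) ! i ^ m))"
proof -
  define es where "es = rev (sorted_list_of_multiset (proots (char_poly A)))"
  let ?Ac = "map_mat complex_of_real A"
  have Ac: "?Ac \<in> carrier_mat n n" using A by simp
  obtain as where cpAc: "char_poly ?Ac = (\<Prod>a\<leftarrow>as. [:- a, 1:])" and las: "length as = n"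
    using char_poly_factorized[OF Ac] by blast
  have real: "Im a = 0" if a: "a \<in> set as" for a
  proof -
    have "poly (char_poly ?Ac) a = 0" unfolding cpAc using a by (rule linear_poly_root)
    hence "eigenvalue ?Ac a" using eigenvalue_root_char_poly[OF Ac] by simp
    then obtain z where "eigenvector ?Ac z a" unfolding eigenvalue_def by blast
    then show ?thesis by (rule real_sym_eigenvalue_real[OF A sym])
  qed
  define rs where "rs = map Re as"
  have as_rs: "as = map complex_of_real rs"
    unfolding rs_def using real by (induction as) (auto simp: complex_eq_iff)
  interpret mp: map_poly_inj_comm_ring_hom "complex_of_real" ..
  have "map_poly complex_of_real (char_poly A) = char_poly ?Ac"
    by (rule of_real_hom.char_poly_hom[OF A, symmetric])
  also have "\<dots> = map_poly complex_of_real (\<Prod>r\<leftarrow>rs. [:- r, 1:])"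
    unfolding cpAc as_rs mp.hom_prod_list by (simp add: o_def)
  finally have cpA: "char_poly A = (\<Prod>r\<leftarrow>rs. [:- r, 1:])" by simp
  have "proots (char_poly A) = mset rs"
    unfolding cpA
  proof (induction rs)
    case (Cons r rs)
    have nz: "(\<Prod>r\<leftarrow>rs. [:- r, 1:]) \<noteq> 0" by (auto simp: prod_list_zero_iff)
    have "(\<Prod>r\<leftarrow>r # rs. [:- r, 1:]) = [:- r, 1:] * (\<Prod>r\<leftarrow>rs. [:- r, 1:])" by simp
    hence "proots (\<Prod>r\<leftarrow>r # rs. [:- r, 1:]) = proots [:- r, 1:] + proots (\<Prod>r\<leftarrow>rs. [:- r, 1:])"
      using nz proots_mult[of "[:- r, 1:]"] by simp
    then show ?case using Cons.IH by simp
  qed simp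
  hence mes: "mset es = mset rs" unfolding es_def by simp
  hence les: "length es = n" using las rs_def by (metis length_map size_mset)
  have "mtr (A ^\<^sub>m m) = (\<Sum>i<n. es ! i ^ m)" for m
  proof -
    obtain B P Q where sd: "schur_decomposition ?Ac as = (B,P,Q)" by (cases "schur_decomposition ?Ac as") auto
    from schur_decomposition[OF Ac cpAc sd]
    have wit: "similar_mat_wit ?Ac B P Q" and ut: "upper_triangular B" and dg: "diag_mat B = as" by auto
    from similar_mat_witD2[OF Ac wit] have B: "B \<in> carrier_mat n n" and P: "P \<in> carrier_mat n n"
      and Q: "Q \<in> carrier_mat n n" and QP: "Q * P = 1\<^sub>m n" by auto
    have Bm: "B ^\<^sub>m m \<in> carrier_mat n n" using B by simp
    have "?Ac ^\<^sub>m m = P * B ^\<^sub>m m * Q" by (rule similar_mat_wit_pow_id[OF wit])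
    hence "mtr (?Ac ^\<^sub>m m) = mtr (P * B ^\<^sub>m m * Q)" by simp
    also have "\<dots> = mtr (Q * (P * B ^\<^sub>m m))"
      by (rule mtr_comm[of _ n n], insert P Bm Q, auto)
    also have "Q * (P * B ^\<^sub>m m) = (Q * P) * B ^\<^sub>m m"
      using P Q Bm by (simp add: assoc_mult_mat)
    also have "\<dots> = B ^\<^sub>m m" by (simp only: QP left_mult_one_mat[OF Bm])
    also have "mtr (B ^\<^sub>m m) = (\<Sum>i<n. B $$ (i,i) ^ m)"
      using upper_tri_pow[OF B ut, of m] B unfolding mtr_def by simp
    also have "\<dots> = (\<Sum>i<n. complex_of_real (rs ! i ^ m))"
    proof (rule sum.cong[OF refl])
      fix i assume i: "i \<in> {..<n}"
      have "diag_mat B ! i = B $$ (i,i)" using B i by (simp add: diag_mat_def)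
      hence "B $$ (i,i) = as ! i" using dg by simp
      then show "B $$ (i,i) ^ m = complex_of_real (rs ! i ^ m)"
        using i las unfolding as_rs by simp
    qed
    finally have "mtr (?Ac ^\<^sub>m m) = complex_of_real (\<Sum>i<n. rs ! i ^ m)" by simp
    moreover have "?Ac ^\<^sub>m m = map_mat complex_of_real (A ^\<^sub>m m)"
      by (rule of_real_hom.mat_hom_pow[OF A, symmetric])
    moreover have "mtr (map_mat complex_of_real (A ^\<^sub>m m)) = complex_of_real (mtr (A ^\<^sub>m m))"
      using A unfolding mtr_def by simp
    ultimately have "complex_of_real (mtr (A ^\<^sub>m m)) = complex_of_real (\<Sum>i<n. rs ! i ^ m)" by simp
    hence "mtr (A ^\<^sub>m m) = (\<Sum>i<n. rs ! i ^ m)" by (rule of_real_eq_iff[THEN iffD1])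
    also have "\<dots> = (\<Sum>i<n. es ! i ^ m)"
      using sum_nth_perm[OF mes[symmetric], of "\<lambda>x. x ^ m"] les las rs_def by simp
    finally show ?thesis .
  qed
  then show ?thesis using les unfolding es_def by blast
qed


definition adjf :: "(nat \<Rightarrow> nat \<Rightarrow> bool) \<Rightarrow> nat \<Rightarrow> nat \<Rightarrow> real" where
  "adjf E = (\<lambda>i j. if E i j then 1 else 0)"

lemma mp_nonneg: "mp (adjf E) n t i j \<ge> 0"
  by (induction t arbitrary: j) (auto intro!: sum_nonneg simp: adjf_def)

lemma walk_bounds:
  assumes pos: "dlo > 0" and dd: "dlo \<le> dhi"
    and db: "\<forall>y<n. dlo \<le> real (deg n E y) \<and> real (deg n E y) \<le> dhi"
  shows "mp (adjf E) n t w x / dhi^t \<le> walk_prob n E w t x \<and> walk_prob n E w t x \<le> mp (adjf E) n t w x / dlo^t"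
proof (induction t arbitrary: x)
  case 0 then show ?case by auto
next
  case (Suc t)
  have dhi: "dhi > 0" using pos dd by simp
  have wnn: "walk_prob n E w t y \<ge> 0" for y
    using Suc.IH[of y] mp_nonneg[of E n t w y] dhi by (meson divide_nonneg_pos order_trans zero_less_power)
  have up: "walk_prob n E w t y * (if E y x then 1 / real (deg n E y) else 0)
      \<le> (mp (adjf E) n t w y / dlo^t) * (adjf E y x / dlo)" if y: "y < n" for y
  proof (cases "E y x")
    case True
    have "walk_prob n E w t y * (1 / real (deg n E y)) \<le> (mp (adjf E) n t w y / dlo^t) * (1 / dlo)"
      using Suc.IH[of y] db y pos wnn mp_nonneg[of E n t w y] by (intro mult_mono frac_le) auto
    then show ?thesis using True by (simp add: adjf_def)
  qed (simp add: adjf_def)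
  have lo: "(mp (adjf E) n t w y / dhi^t) * (adjf E y x / dhi)
      \<le> walk_prob n E w t y * (if E y x then 1 / real (deg n E y) else 0)" if y: "y < n" for y
  proof (cases "E y x")
    case True
    have "(mp (adjf E) n t w y / dhi^t) * (1 / dhi) \<le> walk_prob n E w t y * (1 / real (deg n E y))"
      using Suc.IH[of y] db y pos wnn dhi mp_nonneg[of E n t w y] by (intro mult_mono frac_le) auto
    then show ?thesis using True by (simp add: adjf_def)
  qed (simp add: adjf_def)
  have s1: "(\<Sum>y<n. (mp (adjf E) n t w y / dlo^t) * (adjf E y x / dlo)) = mp (adjf E) n (Suc t) w x / dlo^Suc t"
    by (simp add: sum_divide_distrib mult.commute)
  have s2: "(\<Sum>y<n. (mp (adjf E) n t w y / dhi^t) * (adjf E y x / dhi)) = mp (adjf E) n (Suc t) w x / dhi^Suc t"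
    by (simp add: sum_divide_distrib mult.commute)
  have A: "(\<Sum>y<n. walk_prob n E w t y * (if E y x then 1 / real (deg n E y) else 0))
      \<le> (\<Sum>y<n. (mp (adjf E) n t w y / dlo^t) * (adjf E y x / dlo))"
    by (rule sum_mono) (use up in auto)
  have B: "(\<Sum>y<n. (mp (adjf E) n t w y / dhi^t) * (adjf E y x / dhi))
      \<le> (\<Sum>y<n. walk_prob n E w t y * (if E y x then 1 / real (deg n E y) else 0))"
    by (rule sum_mono) (use lo in auto)
  have W: "walk_prob n E w (Suc t) x = (\<Sum>y<n. walk_prob n E w t y * (if E y x then 1 / real (deg n E y) else 0))"
    by simp
  show ?case using A B unfolding W s1 s2 by blast
qed

lemma adj_entry: "i < n \<Longrightarrow> j < n \<Longrightarrow> adj_mat n E $$ (i,j) = adjf E i j"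
  by (simp add: adj_mat_def adjf_def)

lemma adj_carrier: "adj_mat n E \<in> carrier_mat n n" by (simp add: adj_mat_def)

lemma adj_pow_entry: "i < n \<Longrightarrow> j < n \<Longrightarrow> (adj_mat n E ^\<^sub>m t) $$ (i,j) = mp (adjf E) n t i j"
proof (induction t arbitrary: j)
  case 0 then show ?case using adj_carrier[of n E] by simp
next
  case (Suc t)
  have c: "adj_mat n E ^\<^sub>m t \<in> carrier_mat n n" using adj_carrier by simp
  have "(adj_mat n E ^\<^sub>m Suc t) $$ (i,j) = (\<Sum>k<n. (adj_mat n E ^\<^sub>m t) $$ (i,k) * adj_mat n E $$ (k,j))"
    using Suc.prems c adj_carrier[of n E] by (simp add: scalar_prod_def atLeast0LessThan)
  also have "\<dots> = (\<Sum>k<n. mp (adjf E) n t i k * adjf E k j)"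
    by (rule sum.cong) (use Suc adj_entry in auto)
  finally show ?case by simp
qed

lemma graph_sym: "simple_graph n E \<Longrightarrow> \<forall>i<n. \<forall>j<n. adjf E i j = adjf E j i"
  by (simp add: simple_graph_def adjf_def)

lemma graph_ev:
  assumes phi: "\<phi> \<in> carrier_vec n" and ev: "adj_mat n E *\<^sub>v \<phi> = lam \<cdot>\<^sub>v \<phi>"
  shows "\<forall>i<n. mv (adjf E) n (\<lambda>i. \<phi> $ i) i = lam * \<phi> $ i"
proof (intro allI impI)
  fix i assume i: "i < n"
  have "(adj_mat n E *\<^sub>v \<phi>) $ i = (lam \<cdot>\<^sub>v \<phi>) $ i" using ev by simp
  then show "mv (adjf E) n (\<lambda>i. \<phi> $ i) i = lam * \<phi> $ i"
    using i phi adj_carrier[of n E] adj_entry[of i n _ E]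
    by (simp add: mv_def scalar_prod_def atLeast0LessThan adj_mat_def adjf_def)
qed

lemma graph_entry:
  assumes sg: "simple_graph n E" and n2: "n \<ge> 2"
    and phi: "\<phi> \<in> carrier_vec n" and ev: "adj_mat n E *\<^sub>v \<phi> = eigs n E ! 0 \<cdot>\<^sub>v \<phi>"
    and norm: "(\<Sum>i<n. (\<phi> $ i)^2) = 1" and w: "w < n" and x: "x < n"
  shows "\<bar>mp (adjf E) n l w x - (eigs n E ! 0)^l * \<phi> $ w * \<phi> $ x\<bar>
     \<le> (max \<bar>eigs n E ! 1\<bar> \<bar>eigs n E ! (n - 1)\<bar>)^l"
proof -
  let ?es = "eigs n E"
  let ?M = "max \<bar>eigs n E ! 1\<bar> \<bar>eigs n E ! (n - 1)\<bar>"
  have sym: "\<forall>i<n. \<forall>j<n. adj_mat n E $$ (i,j) = adj_mat n E $$ (j,i)"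
    using graph_sym[OF sg] adj_entry by metis
  from sym_trace_eigs[OF adj_carrier sym]
  have len: "length ?es = n" and tr: "\<And>m. mtr (adj_mat n E ^\<^sub>m m) = (\<Sum>i<n. ?es ! i ^ m)"
    unfolding eigs_def by auto
  have srt: "sorted (rev ?es)" unfolding eigs_def by simp
  have absb: "\<bar>?es ! i\<bar> \<le> ?M" if "1 \<le> i" "i < n" for i
  proof -
    have "?es ! i \<le> ?es ! 1" using sorted_rev_nth_mono[OF srt, of 1 i] that len by simp
    moreover have "?es ! (n-1) \<le> ?es ! i" using sorted_rev_nth_mono[OF srt, of i "n-1"] that len by simp
    ultimately show ?thesis by linarith
  qed
  have mtr_mp: "mtr (adj_mat n E ^\<^sub>m m) = (\<Sum>i<n. mp (adjf E) n m i i)" for m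
    unfolding mtr_def using adj_carrier[of n E] by (simp add: adj_pow_entry)
  have TB: "(\<Sum>i<n. \<Sum>j<n. (mp (adjf E) n N i j)^2) \<le> (?es ! 0)^(2*N) + real (n-1) * ?M^(2*N)" for N
  proof -
    have "(\<Sum>i<n. \<Sum>j<n. (mp (adjf E) n N i j)^2) = (\<Sum>i<n. mp (adjf E) n (2*N) i i)"
      by (rule mp_trace[OF graph_sym[OF sg], symmetric])
    also have "\<dots> = (\<Sum>i<n. ?es ! i ^ (2*N))" using mtr_mp[of "2*N"] tr[of "2*N"] by metis
    also have "\<dots> = ?es ! 0 ^ (2*N) + (\<Sum>i\<in>{1..<n}. ?es ! i ^ (2*N))"
      using n2 by (simp only: lessThan_atLeast0 sum.atLeast_Suc_lessThan[of 0 n] One_nat_def)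
    also have "(\<Sum>i\<in>{1..<n}. ?es ! i ^ (2*N)) \<le> (\<Sum>i\<in>{1..<n}. ?M^(2*N))"
    proof (rule sum_mono)
      fix i assume i: "i \<in> {1..<n}"
      have "?es ! i ^ (2*N) = \<bar>?es ! i\<bar> ^ (2*N)" by (rule power_even_abs[symmetric]) simp
      also have "\<dots> \<le> ?M^(2*N)" using absb[of i] i by (intro power_mono) auto
      finally show "?es ! i ^ (2*N) \<le> ?M^(2*N)" .
    qed
    also have "\<dots> = real (n-1) * ?M^(2*N)" by simp
    finally show ?thesis by simp
  qed
  interpret spec "adjf E" n "\<lambda>i. \<phi> $ i" "?es ! 0" "real (n-1)" ?M
  proof
    show "\<forall>i<n. \<forall>j<n. adjf E i j = adjf E j i" by (rule graph_sym[OF sg])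
    show "\<forall>i<n. mv (adjf E) n (\<lambda>i. \<phi> $ i) i = ?es ! 0 * \<phi> $ i" by (rule graph_ev[OF phi ev])
    show "ip n (\<lambda>i. \<phi> $ i) (\<lambda>i. \<phi> $ i) = 1" using norm by (simp add: ip_def power2_eq_square)
    show "real (n-1) \<ge> 0" by simp
    show "?M \<ge> 0" by simp
    show "\<And>N. (\<Sum>i<n. \<Sum>j<n. (mp (adjf E) n N i j)^2) \<le> (?es ! 0)^(2*N) + real (n-1) * ?M^(2*N)" by (rule TB)
  qed
  show ?thesis using entry_bound[OF w x, of l] by simp
qed



lemma pow_upper: assumes "0 \<le> (x::real)" "x \<le> 1" shows "(1+x)^m \<le> 1 + (2^m - 1)*x"
proof (induction m)
  case 0 then show ?case by simp
next
  case (Suc m)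
  have "(1+x)^Suc m = (1+x)*(1+x)^m" by simp
  also have "\<dots> \<le> (1+x)*(1 + (2^m - 1)*x)" using Suc assms by (intro mult_left_mono) auto
  also have "\<dots> = 1 + 2^m*x + (2^m - 1)*x*x" by (simp add: algebra_simps)
  also have "\<dots> \<le> 1 + 2^m*x + (2^m - 1)*x"
  proof -
    have "(2::real)^m \<ge> 1" by simp
    hence "(2^m - 1)*x*x \<le> (2^m - 1)*x*1" using assms by (intro mult_left_mono) auto
    then show ?thesis by simp
  qed
  also have "\<dots> = 1 + (2^Suc m - 1)*x" by (simp add: algebra_simps)
  finally show ?case .
qed

lemma pow_lower: assumes "0 \<le> (y::real)" "y \<le> 1" shows "1 - real m*y \<le> (1-y)^m"
  using Bernoulli_inequality[of "-y" m] assms by simp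

lemma nat_bound: "4*(l+2) \<le> (2::nat)^(l+5)"
proof -
  have "l + 2 < 2^(l+2)" by (rule less_exp)
  hence "4*(l+2) \<le> 4*2^(l+2)" by simp
  also have "\<dots> \<le> 2^(l+5)" by (simp add: power_add)
  finally show ?thesis .
qed

lemma final_est:
  fixes q t E lam pw px m P M :: real and l n :: nat
  assumes q: "q > 0" and n: "n > 0" and t0: "t \<ge> 0" and t1: "32*t \<le> 1"
    and Pup: "P \<le> m/(q*(1-t))^l" and Plo: "m/(q*(1+t))^l \<le> P"
    and mb: "\<bar>m - lam^l*pw*px\<bar> \<le> M^l"
    and uw: "\<bar>sqrt n * pw - 1\<bar> \<le> t" and ux: "\<bar>sqrt n * px - 1\<bar> \<le> t"
    and lam_lo: "q*(1-t)^2/(1+t) \<le> lam" and lam_hi: "lam \<le> q*(1+t)^2/(1-t)"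
    and Eb: "n * M^l/(q*(1-t))^l \<le> E"
  shows "\<bar>n*P - 1\<bar> \<le> 2^(l+5)*t + E"
proof -
  define uw' where "uw' = sqrt n * pw"
  define ux' where "ux' = sqrt n * px"
  have npp: "n * (pw * px) = uw' * ux'" unfolding uw'_def ux'_def
    by (simp add: algebra_simps)
  have uw0: "uw' \<ge> 1 - t" "uw' \<le> 1 + t" using uw unfolding uw'_def by auto
  have ux0: "ux' \<ge> 1 - t" "ux' \<le> 1 + t" using ux unfolding ux'_def by auto
  have t14: "t \<le> 1/32" using t1 by simp
  have Ml: "M^l \<ge> 0" using mb by linarith
  have qm: "q*(1-t) > 0" "q*(1+t) > 0" using q t14 t0 by auto
  define a1 where "a1 = lam / (q*(1-t))"
  define a2 where "a2 = lam / (q*(1+t))"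
  have lam0: "lam > 0"
  proof -
    have "q*(1-t)^2/(1+t) > 0" using q t14 t0 by (intro divide_pos_pos mult_pos_pos) auto
    then show ?thesis using lam_lo by linarith
  qed
  have a1_hi: "a1 \<le> 1 + 8*t"
  proof -
    have "a1 \<le> (q*(1+t)^2/(1-t)) / (q*(1-t))" unfolding a1_def
      using lam_hi qm by (intro divide_right_mono) auto
    also have "\<dots> = (1+t)^2/(1-t)^2"
    proof -
      have eq: "(1-t)*(q*(1-t)) = q*(1-t)^2" by (simp add: power2_eq_square)
      have "(q*(1+t)^2/(1-t)) / (q*(1-t)) = (q*(1+t)^2)/(q*(1-t)^2)" by (simp add: divide_divide_eq_left eq)
      also have "\<dots> = (1+t)^2/(1-t)^2" using q by (rule nonzero_mult_divide_mult_cancel_left[OF less_imp_neq[symmetric]])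
      finally show ?thesis .
    qed
    also have "\<dots> \<le> 1 + 8*t"
    proof -
      have "(1+t)^2 \<le> (1+8*t)*(1-t)^2"
      proof -
        have "(1+8*t)*(1-t)^2 - (1+t)^2 = 4*t*(1 - 4*t + 2*t^2)" by (simp add: power2_eq_square algebra_simps)
        moreover have "4*t*(1 - 4*t + 2*t^2) \<ge> 0" using t0 t14 by (intro mult_nonneg_nonneg) auto
        ultimately show ?thesis by linarith
      qed
      moreover have "(1-t)^2 > 0" using t14 by simp
      ultimately show ?thesis by (simp add: divide_le_eq)
    qed
    finally show ?thesis .
  qed
  have a1_0: "a1 \<ge> 0" unfolding a1_def using lam0 qm by simp
  have a2_lo: "a2 \<ge> 1 - 4*t"
  proof -
    have "(q*(1-t)^2/(1+t)) / (q*(1+t)) \<le> a2" unfolding a2_def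
      using lam_lo qm by (intro divide_right_mono) auto
    moreover have "(q*(1-t)^2/(1+t)) / (q*(1+t)) = (1-t)^2/(1+t)^2"
    proof -
      have eq: "(1+t)*(q*(1+t)) = q*(1+t)^2" by (simp add: power2_eq_square)
      have "(q*(1-t)^2/(1+t)) / (q*(1+t)) = (q*(1-t)^2)/(q*(1+t)^2)" by (simp add: divide_divide_eq_left eq)
      also have "\<dots> = (1-t)^2/(1+t)^2" using q by (rule nonzero_mult_divide_mult_cancel_left[OF less_imp_neq[symmetric]])
      finally show ?thesis .
    qed
    moreover have "1 - 4*t \<le> (1-t)^2/(1+t)^2"
    proof -
      have "(1-4*t)*(1+t)^2 \<le> (1-t)^2"
      proof -
        have "(1-t)^2 - (1-4*t)*(1+t)^2 = t*(8*t + 4*t^2)" by (simp add: power2_eq_square algebra_simps)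
        moreover have "t*(8*t + 4*t^2) \<ge> 0" using t0 by simp
        ultimately show ?thesis by linarith
      qed
      moreover have "(1+t)^2 > 0" using t0 by simp
      ultimately show ?thesis by (simp add: le_divide_eq)
    qed
    ultimately show ?thesis by linarith
  qed
  have E0: "n * M^l/(q*(1+t))^l \<le> E"
  proof -
    have "n * M^l/(q*(1+t))^l \<le> n * M^l/(q*(1-t))^l"
      using qm Ml t0 q t14 by (intro divide_left_mono mult_nonneg_nonneg power_mono mult_pos_pos zero_less_power) auto
    then show ?thesis using Eb by linarith
  qed
  have up: "n*P \<le> 1 + 2^(l+5)*t + E"
  proof -
    have "n*P \<le> n * (m/(q*(1-t))^l)" using Pup n by (intro mult_left_mono) auto
    also have "\<dots> \<le> n * ((lam^l*pw*px + M^l)/(q*(1-t))^l)"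
      using mb qm n by (intro mult_left_mono divide_right_mono) auto
    also have "\<dots> = a1^l * (uw' * ux') + n * M^l/(q*(1-t))^l"
    proof -
      have "n * ((lam^l*pw*px + M^l)/(q*(1-t))^l) = (lam^l/(q*(1-t))^l) * (n*(pw*px)) + n * M^l/(q*(1-t))^l"
        by (simp add: add_divide_distrib algebra_simps)
      then show ?thesis unfolding a1_def npp by (simp add: power_divide)
    qed
    also have "\<dots> \<le> (1+8*t)^l * (1+8*t)^2 + E"
    proof -
      have "a1^l \<le> (1+8*t)^l" using a1_0 a1_hi by (intro power_mono) auto
      moreover have "uw' * ux' \<le> (1+8*t)^2"
      proof -
        have "uw' * ux' \<le> (1+t)*(1+t)" using uw0 ux0 t14 by (intro mult_mono) auto
        also have "\<dots> \<le> (1+8*t)^2" using t0 by (simp add: power2_eq_square mult_mono)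
        finally show ?thesis .
      qed
      moreover have "uw' * ux' \<ge> 0" using uw0 ux0 t14 by simp
      ultimately have "a1^l * (uw' * ux') \<le> (1+8*t)^l * (1+8*t)^2"
        using a1_0 t0 by (intro mult_mono) auto
      then show ?thesis using Eb by linarith
    qed
    also have "(1+8*t)^l * (1+8*t)^2 = (1+8*t)^(l+2)" by (simp add: power_add power2_eq_square)
    also have "\<dots> \<le> 1 + (2^(l+2) - 1)*(8*t)" using t0 t1 by (intro pow_upper) auto
    also have "\<dots> \<le> 1 + 2^(l+5)*t" using t0 by (simp add: power_add algebra_simps)
    finally show ?thesis by simp
  qed
  have lo: "1 - 2^(l+5)*t - E \<le> n*P"
  proof -
    have "1 - 2^(l+5)*t \<le> 1 - real (l+2)*(4*t)"
    proof -
      have "real (4*(l+2)) \<le> 2^(l+5)" using nat_bound[of l] by (metis of_nat_le_iff of_nat_numeral of_nat_power)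
      hence "real (4*(l+2))*t \<le> 2^(l+5)*t" using t0 by (intro mult_right_mono) auto
      hence "real (l+2)*(4*t) \<le> 2^(l+5)*t" by (simp add: mult_ac)
      then show ?thesis by (simp add: algebra_simps)
    qed
    also have "\<dots> \<le> (1 - 4*t)^(l+2)" using t0 t1 by (intro pow_lower) auto
    also have "\<dots> = (1-4*t)^l * (1-4*t)^2" by (simp add: power_add power2_eq_square)
    also have "\<dots> \<le> a2^l * (uw' * ux')"
    proof -
      have "(1-4*t)^l \<le> a2^l" using a2_lo t1 by (intro power_mono) auto
      moreover have "(1-4*t)^2 \<le> uw' * ux'"
      proof -
        have "(1-4*t)^2 \<le> (1-t)*(1-t)" using t0 t1 by (simp add: power2_eq_square mult_mono)
        also have "\<dots> \<le> uw' * ux'" using uw0 ux0 t14 by (intro mult_mono) auto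
        finally show ?thesis .
      qed
      moreover have "(1-4*t)^2 \<ge> 0" by simp
      moreover have "a2^l \<ge> 0" using a2_lo t1 by simp
      ultimately show ?thesis by (intro mult_mono) auto
    qed
    finally have 1: "1 - 2^(l+5)*t \<le> a2^l * (uw' * ux')" .
    have "a2^l * (uw' * ux') - n * M^l/(q*(1+t))^l = n * ((lam^l*pw*px - M^l)/(q*(1+t))^l)"
    proof -
      have "n * ((lam^l*pw*px - M^l)/(q*(1+t))^l) = (lam^l/(q*(1+t))^l) * (n*(pw*px)) - n * M^l/(q*(1+t))^l"
        by (simp add: diff_divide_distrib algebra_simps)
      then show ?thesis unfolding a2_def npp by (simp add: power_divide)
    qed
    also have "\<dots> \<le> n * (m/(q*(1+t))^l)"
      using mb qm n by (intro mult_left_mono divide_right_mono) auto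
    also have "\<dots> \<le> n * P" using Plo n by (intro mult_left_mono) auto
    finally show ?thesis using 1 E0 by linarith
  qed
  show ?thesis using up lo by (simp add: abs_le_iff algebra_simps)
qed



lemma deg_sum: "(\<Sum>j<n. adjf E w j) = real (deg n E w)"
proof -
  have "(\<Sum>j<n. adjf E w j) = (\<Sum>j\<in>{j\<in>{..<n}. E w j}. 1)"
    unfolding adjf_def by (rule sum.inter_filter[symmetric]) simp
  also have "\<dots> = real (card {j\<in>{..<n}. E w j})" by simp
  also have "{j\<in>{..<n}. E w j} = nbhd n E w" unfolding nbhd_def by auto
  finally show ?thesis unfolding deg_def by simp
qed

lemma asym_basic:
  fixes n k :: nat and pn :: real
  assumes n3: "n \<ge> 3" and k2: "k \<ge> 2" and pb: "ln n / real n powr ((real k - 1) / real k) \<le> pn"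
  defines "q \<equiv> pn * real n"
  shows "ln (real n) \<ge> 1" and "q \<ge> ln n * real n powr (1/k)" and "real n powr (1/k) > 1"
    and "q > 1" and "ln q \<ge> ln n / k" and "q^k \<ge> real n" and "ln n / q \<le> 1 / real n powr (1/k)"
proof -
  have n0: "real n > 0" using n3 by simp
  have k0: "real k > 0" using k2 by simp
  show L1: "ln (real n) \<ge> 1"
  proof -
    have "exp 1 \<le> real n" using exp_le n3 by linarith
    then show ?thesis using n0 by (metis ln_exp ln_le_cancel_iff exp_gt_zero)
  qed
  have e: "real n / real n powr ((real k - 1) / real k) = real n powr (1/k)"
  proof -
    have "real n / real n powr ((real k - 1) / real k) = real n powr 1 / real n powr ((real k - 1) / real k)"
      using n0 by simp
    also have "\<dots> = real n powr (1 - (real k - 1) / real k)" by (rule powr_diff[symmetric])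
    also have "1 - (real k - 1) / real k = 1 / real k" using k0 by (simp add: field_simps)
    finally show ?thesis .
  qed
  have "ln n * real n powr (1/k) = ln n * (real n / real n powr ((real k - 1) / real k))"
    using e by simp
  also have "\<dots> = ln n / real n powr ((real k - 1) / real k) * real n"
    by (simp add: mult.commute times_divide_eq_right)
  also have "\<dots> \<le> pn * real n" using pb n0 by (intro mult_right_mono) auto
  finally show Q: "q \<ge> ln n * real n powr (1/k)" unfolding q_def .
  show P1: "real n powr (1/k) > 1" using n3 k0 by (intro gr_one_powr) auto
  have Q2: "q \<ge> real n powr (1/k)"
  proof -
    have "1 * real n powr (1/k) \<le> ln n * real n powr (1/k)" using L1 P1 by (intro mult_right_mono) auto
    then show ?thesis using Q by linarith
  qed
  show Qg: "q > 1" using Q2 P1 by linarith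
  have "ln (real n powr (1/k)) \<le> ln q" using Q2 P1 n0 by (subst ln_le_cancel_iff) auto
  then show "ln q \<ge> ln n / k" by (simp add: ln_powr)
  have "(real n powr (1/k))^k = real n"
  proof -
    have "(real n powr (1/k))^k = (real n powr (1/k)) powr (real k)"
      using P1 n0 by (intro powr_realpow[symmetric]) simp
    also have "\<dots> = real n powr (1/k * k)" by (rule powr_powr)
    also have "\<dots> = real n" using k0 n0 by simp
    finally show ?thesis .
  qed
  moreover have "(real n powr (1/k))^k \<le> q^k" using Q2 P1 by (intro power_mono) auto
  ultimately show "q^k \<ge> real n" by simp
  have "ln n / q \<le> ln n / (ln n * real n powr (1/k))"
    using Q L1 P1 Qg n0 n3 by (intro divide_left_mono mult_pos_pos) auto
  also have "\<dots> = 1 / real n powr (1/k)" using L1 by simp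
  finally show "ln n / q \<le> 1 / real n powr (1/k)" .
qed

lemma main_fixed:
  fixes k l n :: nat and pn C3 C4 C5 C6 eps C8 :: real and E :: "nat \<Rightarrow> nat \<Rightarrow> bool"
  assumes k2: "k \<ge> 2" and lk: "l \<ge> 3*k+2" and n3: "n \<ge> 3"
    and pb: "ln n / real n powr ((real k - 1)/real k) \<le> pn"
    and small: "(\<bar>C3\<bar> + real k * \<bar>C6\<bar>)^2 * (1 / real n powr (1/k)) \<le> 1/1024"
    and good: "good_graph k n pn C3 C4 C5 C6 eps C8 E" and w: "w < n" and x: "x < n"
  shows "\<bar>walk_prob n E w l x - 1 / real n\<bar>
     \<le> (2^(l+5)*(\<bar>C3\<bar> + real k*\<bar>C6\<bar>) + 2^l*\<bar>C8\<bar>^l) * sqrt (ln n) / (sqrt pn * real n powr (3/2))"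
proof -
  define q where "q = pn * real n"
  define L where "L = ln (real n)"
  have L1: "L \<ge> 1" and Qn: "q \<ge> L * real n powr (1/k)" and P1: "real n powr (1/k) > 1"
    and Q: "q > 1" and lnq: "ln q \<ge> L / k" and qk: "q^k \<ge> real n" and gam2: "L / q \<le> 1 / real n powr (1/k)"
    using asym_basic[OF n3 k2 pb] unfolding q_def[symmetric] L_def[symmetric] by auto
  have n0: "real n > 0" using n3 by simp
  have k0: "real k > 0" using k2 by simp
  have pn0: "pn > 0"
  proof -
    have "0 < pn * real n" using Q unfolding q_def by simp
    then show ?thesis by (rule zero_less_mult_pos2[OF _ n0])
  qed
  define g where "g = sqrt (L / q)"
  define K0 where "K0 = \<bar>C3\<bar> + real k * \<bar>C6\<bar>"
  define t where "t = K0 * g"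
  have g0: "g > 0" unfolding g_def using L1 Q by simp
  have K00: "K0 \<ge> 0" unfolding K0_def by simp
  have t0: "t \<ge> 0" unfolding t_def using K00 g0 by simp
  have t1: "32 * t \<le> 1"
  proof -
    have "(32*t)^2 = 1024 * (K0^2 * (L/q))" unfolding t_def g_def using L1 Q by (simp add: power_mult_distrib)
    also have "\<dots> \<le> 1024 * (K0^2 * (1 / real n powr (1/k)))"
      using gam2 by (intro mult_left_mono) auto
    also have "\<dots> \<le> 1" using small unfolding K0_def by linarith
    finally have "(32*t)^2 \<le> 1^2" by simp
    then show ?thesis by (rule power2_le_imp_le) simp
  qed
  have t12: "t \<le> 1/2" using t1 by simp
  have sg: "simple_graph n E"
    and degb: "\<forall>v<n. \<bar>real (deg n E v) - pn * n\<bar> \<le> C3 * sqrt (pn * n * ln n)"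
    and phiex: "\<exists>\<phi> \<in> carrier_vec n. adj_mat n E *\<^sub>v \<phi> = eigs n E ! 0 \<cdot>\<^sub>v \<phi> \<and>
        (\<Sum>i<n. (\<phi> $ i)^2) = 1 \<and>
        (\<forall>i<n. \<bar>\<phi> $ i - 1 / sqrt n\<bar> \<le> C6 * ln n powr (3/2) / (sqrt pn * n * ln (pn * n)))"
    and eigb: "max \<bar>eigs n E ! 1\<bar> \<bar>eigs n E ! (n - 1)\<bar> \<le> C8 * sqrt (pn * n)"
    using good unfolding good_graph_def by auto
  obtain \<phi> where phi: "\<phi> \<in> carrier_vec n" and ev: "adj_mat n E *\<^sub>v \<phi> = eigs n E ! 0 \<cdot>\<^sub>v \<phi>"
    and norm: "(\<Sum>i<n. (\<phi> $ i)^2) = 1"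
    and phib: "\<forall>i<n. \<bar>\<phi> $ i - 1 / sqrt n\<bar> \<le> C6 * ln n powr (3/2) / (sqrt pn * n * ln (pn * n))"
    using phiex by blast
  have sqL: "sqrt (pn * n * ln n) = q * g"
  proof -
    have "pn * n * ln n = q^2 * (L/q)" unfolding q_def L_def using Q unfolding q_def by (simp add: power2_eq_square)
    hence "sqrt (pn * n * ln n) = sqrt (q^2 * (L/q))" by (simp only:)
    also have "\<dots> = sqrt (q^2) * sqrt (L/q)" by (rule real_sqrt_mult)
    also have "sqrt (q^2) = q" using Q by simp
    finally show ?thesis unfolding g_def .
  qed
  have degs: "\<forall>y<n. q*(1-t) \<le> real (deg n E y) \<and> real (deg n E y) \<le> q*(1+t)"
  proof (intro allI impI)
    fix y assume y: "y < n"
    have "\<bar>real (deg n E y) - q\<bar> \<le> C3 * (q * g)" using degb y sqL unfolding q_def by simp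
    also have "\<dots> \<le> \<bar>C3\<bar> * (q * g)" using Q g0 by (intro mult_right_mono) auto
    also have "\<dots> \<le> K0 * (q * g)" unfolding K0_def using Q g0 k0 by (intro mult_right_mono) auto
    also have "\<dots> = q * t" unfolding t_def by simp
    finally show "q*(1-t) \<le> real (deg n E y) \<and> real (deg n E y) \<le> q*(1+t)" by (simp add: abs_le_iff algebra_simps)
  qed
  have ub: "\<bar>sqrt n * \<phi> $ i - 1\<bar> \<le> t" if i: "i < n" for i
  proof -
    define B where "B = C6 * L powr (3/2) / (sqrt pn * n * ln q)"
    have lnq0: "ln q > 0" using Q by simp
    have "\<bar>sqrt n * \<phi> $ i - 1\<bar> = sqrt n * \<bar>\<phi> $ i - 1 / sqrt n\<bar>"
    proof -
      have "sqrt n * (\<phi> $ i - 1 / sqrt n) = sqrt n * \<phi> $ i - 1" using n0 by (simp add: right_diff_distrib)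
      hence "\<bar>sqrt n * \<phi> $ i - 1\<bar> = \<bar>sqrt n\<bar> * \<bar>\<phi> $ i - 1 / sqrt n\<bar>" by (metis abs_mult)
      then show ?thesis by simp
    qed
    also have "\<dots> \<le> sqrt n * B" using phib i unfolding B_def q_def L_def by (intro mult_left_mono) auto
    also have "\<dots> \<le> sqrt n * \<bar>B\<bar>" by (intro mult_left_mono) auto
    also have "sqrt n * \<bar>B\<bar> = \<bar>C6\<bar> * (L / ln q) * g"
    proof -
      have Lp: "L powr (3/2) = L * sqrt L"
      proof -
        have "L powr (3/2) = L powr (1 + 1/2)" by simp
        also have "\<dots> = L powr 1 * L powr (1/2)" by (rule powr_add)
        also have "\<dots> = L * sqrt L" using L1 by (simp add: powr_half_sqrt)
        finally show ?thesis .
      qed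
      have nn: "sqrt n * sqrt n = real n" by simp
      have sq: "sqrt pn * n = sqrt q * sqrt n" unfolding q_def
        by (simp only: real_sqrt_mult mult.assoc nn)
      have Bp: "\<bar>B\<bar> = \<bar>C6\<bar> * (L * sqrt L) / (sqrt q * sqrt n * ln q)"
      proof -
        have d: "sqrt pn * n * ln q > 0" using pn0 n0 lnq0 by simp
        have "\<bar>B\<bar> = \<bar>C6 * L powr (3/2)\<bar> / \<bar>sqrt pn * n * ln q\<bar>" unfolding B_def by (rule abs_divide)
        also have "\<bar>sqrt pn * n * ln q\<bar> = sqrt pn * n * ln q" using d by simp
        also have "\<bar>C6 * L powr (3/2)\<bar> = \<bar>C6\<bar> * L powr (3/2)" by (simp add: abs_mult)
        finally show ?thesis unfolding Lp sq .
      qed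
      have G1: "\<And>a b c s::real. 0 < s \<Longrightarrow> s * (a / (b * s * c)) = a / (b * c)" by (simp add: field_simps)
      have G2: "\<And>a L sL sq lq::real. a * (L * sL) / (sq * lq) = a * (L / lq) * (sL / sq)" by (simp add: mult_ac)
      have "sqrt n * \<bar>B\<bar> = \<bar>C6\<bar> * (L * sqrt L) / (sqrt q * ln q)"
        unfolding Bp using n0 by (intro G1) simp
      also have "\<dots> = \<bar>C6\<bar> * (L / ln q) * (sqrt L / sqrt q)" by (rule G2)
      also have "sqrt L / sqrt q = g" unfolding g_def by (simp add: real_sqrt_divide)
      finally show ?thesis .
    qed
    also have "\<dots> \<le> \<bar>C6\<bar> * real k * g"
    proof -
      have "L \<le> real k * ln q" using lnq k0 by (simp add: divide_le_eq mult.commute)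
      hence "L / ln q \<le> real k" using lnq0 by (simp add: divide_le_eq)
      then show ?thesis using g0 by (intro mult_right_mono mult_left_mono) auto
    qed
    also have "\<dots> \<le> t" unfolding t_def K0_def using g0 by (simp add: algebra_simps)
    finally show ?thesis .
  qed
  have u_lo: "sqrt n * \<phi> $ i \<ge> 1 - t" and u_hi: "sqrt n * \<phi> $ i \<le> 1 + t" if "i < n" for i
    using ub[OF that] by (auto simp: abs_le_iff)
  define lam where "lam = eigs n E ! 0"
  have evw: "(\<Sum>j<n. adjf E w j * (sqrt n * \<phi> $ j)) = lam * (sqrt n * \<phi> $ w)"
  proof -
    have "mv (adjf E) n (\<lambda>i. \<phi> $ i) w = lam * \<phi> $ w" using graph_ev[OF phi ev] w unfolding lam_def by blast
    hence "sqrt n * (\<Sum>j<n. adjf E w j * \<phi> $ j) = sqrt n * (lam * \<phi> $ w)" unfolding mv_def by simp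
    then show ?thesis by (simp add: sum_distrib_left mult_ac)
  qed
  have dw: "q*(1-t) \<le> real (deg n E w)" "real (deg n E w) \<le> q*(1+t)" using degs w by auto
  have S_hi: "(\<Sum>j<n. adjf E w j * (sqrt n * \<phi> $ j)) \<le> q*(1+t)^2"
  proof -
    have "(\<Sum>j<n. adjf E w j * (sqrt n * \<phi> $ j)) \<le> (\<Sum>j<n. adjf E w j * (1+t))"
      by (rule sum_mono) (use u_hi in \<open>auto simp: adjf_def\<close>)
    also have "\<dots> = real (deg n E w) * (1+t)" by (simp add: sum_distrib_right[symmetric] deg_sum)
    also have "\<dots> \<le> q*(1+t)*(1+t)" using dw t0 by (intro mult_right_mono) auto
    finally show ?thesis by (simp add: power2_eq_square mult_ac)
  qed
  have S_lo: "q*(1-t)^2 \<le> (\<Sum>j<n. adjf E w j * (sqrt n * \<phi> $ j))"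
  proof -
    have "q*(1-t)*(1-t) \<le> real (deg n E w) * (1-t)" using dw t12 by (intro mult_right_mono) auto
    also have "\<dots> = (\<Sum>j<n. adjf E w j * (1-t))" by (simp add: sum_distrib_right[symmetric] deg_sum)
    also have "\<dots> \<le> (\<Sum>j<n. adjf E w j * (sqrt n * \<phi> $ j))"
      by (rule sum_mono) (use u_lo in \<open>auto simp: adjf_def\<close>)
    finally show ?thesis by (simp add: power2_eq_square mult_ac)
  qed
  have uw_pos: "sqrt n * \<phi> $ w > 0" using u_lo[OF w] t12 by linarith
  have lam_hi: "lam \<le> q*(1+t)^2/(1-t)"
  proof -
    have R0: "q*(1+t)^2/(1-t) \<ge> 0" using Q t12 by simp
    show ?thesis
    proof (cases "lam < 0")
      case True then show ?thesis using R0 by linarith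
    next
      case False
      hence "lam * (1-t) \<le> lam * (sqrt n * \<phi> $ w)" using u_lo[OF w] by (intro mult_left_mono) auto
      also have "lam * (sqrt n * \<phi> $ w) \<le> q*(1+t)^2" using evw S_hi by simp
      finally show ?thesis using t12 by (simp add: le_divide_eq)
    qed
  qed
  have lam_lo: "q*(1-t)^2/(1+t) \<le> lam"
  proof -
    have lp: "lam * (sqrt n * \<phi> $ w) \<ge> q*(1-t)^2" using evw S_lo by simp
    have "q*(1-t)^2 > 0" using Q t12 by simp
    hence "0 < lam * (sqrt n * \<phi> $ w)" using lp by linarith
    hence "lam > 0" by (rule zero_less_mult_pos2[OF _ uw_pos])
    hence "lam * (sqrt n * \<phi> $ w) \<le> lam * (1+t)" using u_hi[OF w] by (intro mult_left_mono) auto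
    hence "q*(1-t)^2 \<le> lam * (1+t)" using lp by simp
    then show ?thesis using t0 by (simp add: divide_le_eq)
  qed
  define P where "P = walk_prob n E w l x"
  define m where "m = mp (adjf E) n l w x"
  have dlo: "q*(1-t) > 0" using Q t12 by simp
  have wb: "m / (q*(1+t))^l \<le> P \<and> P \<le> m / (q*(1-t))^l"
    unfolding P_def m_def by (rule walk_bounds[OF dlo _ degs]) (use t0 Q in simp)
  define M where "M = max \<bar>eigs n E ! 1\<bar> \<bar>eigs n E ! (n - 1)\<bar>"
  have mb: "\<bar>m - lam^l * \<phi> $ w * \<phi> $ x\<bar> \<le> M^l"
    unfolding m_def lam_def M_def by (rule graph_entry[OF sg _ phi ev norm w x]) (use n3 in simp)
  have M0: "M \<ge> 0" unfolding M_def by simp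
  define s where "s = sqrt q"
  have s0: "s > 0" unfolding s_def using Q by simp
  have s2: "s^2 = q" unfolding s_def using Q by simp
  have Ms: "M \<le> \<bar>C8\<bar> * s"
  proof -
    have "M \<le> C8 * s" using eigb unfolding M_def s_def q_def by simp
    also have "\<dots> \<le> \<bar>C8\<bar> * s" using s0 by (intro mult_right_mono) auto
    finally show ?thesis .
  qed
  have sn: "real n \<le> s^(l-1)"
  proof -
    have "q^(2*k) \<le> q^(l-1)" using Q lk by (intro power_increasing) auto
    moreover have "(real n)^2 \<le> q^(2*k)"
    proof -
      have "q^(2*k) = (q^k)^2" by (simp only: power_mult[symmetric] mult.commute)
      moreover have "(real n)^2 \<le> (q^k)^2" using qk n0 by (intro power_mono) auto
      ultimately show ?thesis by (simp only:)
    qed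
    moreover have "(s^(l-1))^2 = q^(l-1)"
    proof -
      have "(s^(l-1))^2 = (s^2)^(l-1)" by (simp only: power_mult[symmetric] mult.commute)
      also have "\<dots> = q^(l-1)" by (simp only: s2)
      finally show ?thesis .
    qed
    ultimately have "(real n)^2 \<le> (s^(l-1))^2" by linarith
    then show ?thesis by (rule power2_le_imp_le) (use s0 in auto)
  qed
  have Eb: "real n * M^l / (q*(1-t))^l \<le> 2^l * \<bar>C8\<bar>^l * g"
  proof -
    have "real n * M^l / (q*(1-t))^l \<le> real n * (\<bar>C8\<bar> * s)^l / (q/2)^l"
    proof (rule frac_le)
      show "0 \<le> real n * (\<bar>C8\<bar> * s)^l" using s0 by simp
      show "real n * M^l \<le> real n * (\<bar>C8\<bar> * s)^l" using Ms M0 by (intro mult_left_mono power_mono) auto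
      show "0 < (q/2)^l" using Q by simp
      show "(q/2)^l \<le> (q*(1-t))^l" using Q t12 t0 by (intro power_mono) auto
    qed
    also have "\<dots> = 2^l * \<bar>C8\<bar>^l * (real n / s^l)"
    proof -
      have "q^l = (s^2)^l" using s2 by simp
      also have "\<dots> = (s^l)^2" by (simp only: power_mult[symmetric] mult.commute)
      finally have "q^l = s^l * s^l" by (simp add: power2_eq_square)
      have G: "\<And>a b c nn::real. b > 0 \<Longrightarrow> c > 0 \<Longrightarrow> nn * (a*b) / (b*b/c) = c * a * (nn / b)"
        by (simp add: field_simps)
      have "real n * (\<bar>C8\<bar> * s)^l / (q/2)^l = real n * (\<bar>C8\<bar>^l * s^l) / (s^l * s^l / 2^l)"
        using \<open>q^l = s^l * s^l\<close> by (simp add: power_mult_distrib power_divide)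
      also have "\<dots> = 2^l * \<bar>C8\<bar>^l * (real n / s^l)" using s0 by (intro G) auto
      finally show ?thesis .
    qed
    also have "\<dots> \<le> 2^l * \<bar>C8\<bar>^l * g"
    proof -
      have e: "s^l = s * s^(l-1)"
      proof -
        obtain l' where "l = Suc l'" using lk by (cases l) auto
        then show ?thesis by simp
      qed
      have "real n / s^l \<le> s^(l-1) / s^l" using sn s0 by (intro divide_right_mono) auto
      also have "s^(l-1) / s^l = 1 / s" using e s0 by simp
      also have "1/s \<le> g"
      proof -
        have "g = sqrt L / s" unfolding g_def s_def by (simp add: real_sqrt_divide)
        then show ?thesis using L1 s0 by (simp add: divide_right_mono)
      qed
      finally have "real n / s^l \<le> g" .
      then show ?thesis by (intro mult_left_mono) auto
    qed
    finally show ?thesis by simp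
  qed
  have fin: "\<bar>real n * P - 1\<bar> \<le> 2^(l+5)*t + 2^l * \<bar>C8\<bar>^l * g"
    apply (rule final_est[OF _ _ t0 t1 _ _ mb ub[OF w] ub[OF x] lam_lo lam_hi Eb])
    using Q n3 wb by auto
  define C where "C = 2^(l+5)*(\<bar>C3\<bar> + real k*\<bar>C6\<bar>) + 2^l*\<bar>C8\<bar>^l"
  have fin2: "\<bar>real n * P - 1\<bar> \<le> C * g" using fin unfolding C_def t_def K0_def by (simp add: algebra_simps)
  have "\<bar>P - 1 / real n\<bar> = \<bar>real n * P - 1\<bar> / real n"
  proof -
    have G: "\<And>nn PP::real. nn > 0 \<Longrightarrow> PP - 1 / nn = (nn * PP - 1) / nn" by (simp add: field_simps)
    have "P - 1 / real n = (real n * P - 1) / real n" using n0 by (rule G)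
    then show ?thesis using n0 by simp
  qed
  also have "\<dots> \<le> C * g / real n" using fin2 n0 by (intro divide_right_mono) auto
  also have "g / real n = sqrt L / (sqrt pn * real n powr (3/2))"
  proof -
    have np: "real n powr (3/2) = real n * sqrt n"
    proof -
      have "real n powr (3/2) = real n powr (1 + 1/2)" by simp
      also have "\<dots> = real n powr 1 * real n powr (1/2)" by (rule powr_add)
      also have "\<dots> = real n * sqrt n" using n0 by (simp add: powr_half_sqrt)
      finally show ?thesis .
    qed
    have gg: "g = sqrt L / (sqrt pn * sqrt n)" unfolding g_def q_def by (simp add: real_sqrt_divide real_sqrt_mult)
    have G: "\<And>a b c d::real. a / (b * c) / d = a / (b * (d * c))" by (simp add: mult_ac)
    show ?thesis unfolding np gg by (rule G)
  qed
  hence "C * g / real n = C * sqrt L / (sqrt pn * real n powr (3/2))"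
    by (metis times_divide_eq_right)
  finally show ?thesis unfolding P_def C_def L_def .
qed


theorem corollary3p7:
  fixes k l :: nat and p :: "nat \<Rightarrow> real" and c C3 C4 C5 C6 C8 :: real
    and eps :: "nat \<Rightarrow> real"
  assumes "k \<ge> 2" and "l \<ge> 3 * k + 2"
    and "c > 0"
    and "eventually (\<lambda>n. ln n / real n powr ((real k - 1) / real k) \<le> p n \<and>
                          p n \<le> 1 - c * (ln n)^4 / n) sequentially"
    and "eps \<longlonglongrightarrow> 0"
  shows "\<exists>C N. \<forall>n \<ge> N. \<forall>E. good_graph k n (p n) C3 C4 C5 C6 (eps n) C8 E \<longrightarrow>
           (\<forall>w<n. \<forall>x<n. \<bar>walk_prob n E w l x - 1 / real n\<bar>
              \<le> C * sqrt (ln n) / (sqrt (p n) * real n powr (3/2)))"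
proof -
  have k2: "k \<ge> 2" and lk: "l \<ge> 3 * k + 2" using assms by auto
  define K0 where "K0 = \<bar>C3\<bar> + real k * \<bar>C6\<bar>"
  define cc where "cc = 1 / (1024 * (K0^2 + 1))"
  have h1: "0 < K0^2 + 1" using zero_le_power2[of K0] by linarith
  have cc0: "cc > 0" unfolding cc_def using h1 by simp
  have lim: "((\<lambda>n. real n powr (- (1 / real k))) \<longlongrightarrow> 0) sequentially"
    by (rule tendsto_neg_powr) (use k2 in simp, rule filterlim_real_sequentially)
  have ev2: "eventually (\<lambda>n. real n powr (- (1 / real k)) < cc) sequentially"
    using order_tendstoD(2)[OF lim cc0] .
  have ev3: "eventually (\<lambda>n. n \<ge> 3) sequentially" by (rule eventually_ge_at_top)
  have ev1: "eventually (\<lambda>n. ln n / real n powr ((real k - 1) / real k) \<le> p n) sequentially"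
    using assms(4) by (rule eventually_mono) auto
  have "eventually (\<lambda>n. ln n / real n powr ((real k - 1) / real k) \<le> p n \<and>
      real n powr (- (1 / real k)) < cc \<and> n \<ge> 3) sequentially"
    using eventually_conj[OF ev1 eventually_conj[OF ev2 ev3]] by simp
  then obtain N where N: "\<And>n. n \<ge> N \<Longrightarrow> ln n / real n powr ((real k - 1) / real k) \<le> p n \<and>
      real n powr (- (1 / real k)) < cc \<and> n \<ge> 3"
    unfolding eventually_sequentially by blast
  show ?thesis
  proof (intro exI[of _ "2^(l+5)*(\<bar>C3\<bar> + real k*\<bar>C6\<bar>) + 2^l*\<bar>C8\<bar>^l"] exI[of _ N] allI impI)
    fix n E w x
    assume n: "n \<ge> N" and good: "good_graph k n (p n) C3 C4 C5 C6 (eps n) C8 E" and w: "w < n" and x: "x < n"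
    have pb: "ln n / real n powr ((real k - 1) / real k) \<le> p n" and n3: "n \<ge> 3"
      and sm: "real n powr (- (1 / real k)) < cc" using N[OF n] by auto
    have small: "(\<bar>C3\<bar> + real k * \<bar>C6\<bar>)^2 * (1 / real n powr (1/k)) \<le> 1/1024"
    proof -
      have "1 / real n powr (1/k) = real n powr (- (1 / real k))" by (simp add: powr_minus_divide)
      hence "1 / real n powr (1/k) \<le> cc" using sm by simp
      hence "K0^2 * (1 / real n powr (1/k)) \<le> K0^2 * cc" by (intro mult_left_mono) auto
      also have "K0^2 * cc = (1/1024) * (K0^2 / (K0^2 + 1))" unfolding cc_def by (simp add: field_simps)
      also have "\<dots> \<le> (1/1024) * 1" by (intro mult_left_mono) (use h1 in \<open>auto simp: divide_le_eq\<close>)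
      finally show ?thesis unfolding K0_def by simp
    qed
    show "\<bar>walk_prob n E w l x - 1 / real n\<bar>
        \<le> (2^(l+5)*(\<bar>C3\<bar> + real k*\<bar>C6\<bar>) + 2^l*\<bar>C8\<bar>^l) * sqrt (ln n) / (sqrt (p n) * real n powr (3/2))"
      by (rule main_fixed[OF k2 lk n3 pb small good w x])
  qed
qed

end
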